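(* $\mathrm D(\log a)\cap\ell^2_{\rm fin}=\{0\}$ and $\mathrm D(\log a^* )=\{0\}$. In particular the phase operator $\rho=-\frac i2(\log a-\log a^* )$, defined on $\mathrm D(\log a)\cap \mathrm D(\log a^* )$, has $\mathrm D(\rho)=\{0\}$.
   Context: $\ell^2=\ell^2(\mathbb N)$, $\mathbb N=\{0,1,2,\dots\}$, with orthonormal basis $(\xi_n)$; $\ell^2_{\rm fin}$ is the set of finite linear combinations of the $\xi_n$. The annihilation operator $a$ is the closed operator with $a\xi_n=\sqrt n\,\xi_{n-1}$ ($a\xi_0=0$) and domain $\{\sum c_n\xi_n:\sum n|c_n|^2<\infty\}$; $a^*$ is its adjoint, $a^*\xi_n=\sqrt{n+1}\,\xi_{n+1}$. For a linear operator $A$, $\log A$ is defined by $\mathrm D(\log A)=\{f\in\bigcap_{k\ge0}\mathrm D(A^k):\lim_{K\to\infty}\sum_{k=1}^K\frac1k(\mathbf 1-A)^kf\text{ exists}\}$ and $\log Af=-\sum_{k=1}^\infty\frac1k(\mathbf 1-A)^kf$. *)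

theory Defs
  imports "HOL-Analysis.Analysis"
begin

text \<open>Vectors of the Hilbert space l2(N) are represented by their coefficient
  sequences c with respect to the orthonormal basis (xi_n), i.e. f = sum c_n xi_n.\<close>

type_synonym seq = "nat \<Rightarrow> complex"

definition ell2 :: "seq set" where
  "ell2 = {f. summable (\<lambda>n. (cmod (f n))\<^sup>2)}"

definition l2norm :: "seq \<Rightarrow> real" where
  "l2norm f = sqrt (\<Sum>n. (cmod (f n))\<^sup>2)"

definition ell2_fin :: "seq set" where
  "ell2_fin = {f. finite {n. f n \<noteq> 0}}"

text \<open>annihilation operator: a xi_n = sqrt n xi_(n-1), i.e. (a c)_n = sqrt(n+1) c_(n+1)\<close>
definition ann :: "seq \<Rightarrow> seq" where
  "ann f = (\<lambda>n. complex_of_real (sqrt (real (Suc n))) * f (Suc n))"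

definition ann_dom :: "seq set" where
  "ann_dom = {f \<in> ell2. summable (\<lambda>n. real n * (cmod (f n))\<^sup>2)}"

text \<open>creation operator (adjoint of a): a* xi_n = sqrt(n+1) xi_(n+1),
  i.e. (a* c)_n = sqrt n c_(n-1); its domain is the same as that of a.\<close>
definition cre :: "seq \<Rightarrow> seq" where
  "cre f = (\<lambda>n. if n = 0 then 0 else complex_of_real (sqrt (real n)) * f (n - 1))"

definition cre_dom :: "seq set" where
  "cre_dom = {f \<in> ell2. summable (\<lambda>n. real (Suc n) * (cmod (f n))\<^sup>2)}"

primrec pow_dom :: "seq set \<Rightarrow> (seq \<Rightarrow> seq) \<Rightarrow> nat \<Rightarrow> seq set" where
  "pow_dom D T 0 = ell2"
| "pow_dom D T (Suc k) = {f \<in> D. T f \<in> pow_dom D T k}"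

definition one_minus_pow :: "(seq \<Rightarrow> seq) \<Rightarrow> nat \<Rightarrow> seq \<Rightarrow> seq" where
  "one_minus_pow T k f = ((\<lambda>g. (\<lambda>n. g n - T g n)) ^^ k) f"

definition log_partial :: "(seq \<Rightarrow> seq) \<Rightarrow> seq \<Rightarrow> nat \<Rightarrow> seq" where
  "log_partial T f K = (\<lambda>n. \<Sum>k = 1..K. (1 / of_nat k) * one_minus_pow T k f n)"

definition log_dom :: "seq set \<Rightarrow> (seq \<Rightarrow> seq) \<Rightarrow> seq set" where
  "log_dom D T = {f \<in> (\<Inter>k. pow_dom D T k).
      \<exists>g \<in> ell2. (\<lambda>K. l2norm (\<lambda>n. log_partial T f K n - g n)) \<longlonglongrightarrow> 0}"

definition phase_dom :: "seq set" where
  "phase_dom = log_dom ann_dom ann \<inter> log_dom cre_dom cre"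

end

theory Submission
  imports Defs
begin

lemma wsum_minus:
  fixes f g :: seq
  assumes w: "\<And>n. w n \<ge> (0::real)"
    and sf: "summable (\<lambda>n. w n * (cmod (f n))\<^sup>2)"
    and sg: "summable (\<lambda>n. w n * (cmod (g n))\<^sup>2)"
  shows "summable (\<lambda>n. w n * (cmod (f n - g n))\<^sup>2)"
proof (rule summable_comparison_test')
  show "summable (\<lambda>n. 2 * (w n * (cmod (f n))\<^sup>2) + 2 * (w n * (cmod (g n))\<^sup>2))"
    using sf sg by (intro summable_add summable_mult) auto
  fix n :: nat
  have a: "cmod (f n - g n) \<le> cmod (f n) + cmod (g n)" by (rule norm_triangle_ineq4)
  have "(cmod (f n - g n))\<^sup>2 \<le> (cmod (f n) + cmod (g n))\<^sup>2"
    using a by (intro power_mono) auto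
  also have "\<dots> \<le> 2 * (cmod (f n))\<^sup>2 + 2 * (cmod (g n))\<^sup>2"
  proof -
    have e: "(cmod (f n) + cmod (g n))\<^sup>2 + (cmod (f n) - cmod (g n))\<^sup>2 = 2 * (cmod (f n))\<^sup>2 + 2 * (cmod (g n))\<^sup>2"
      by (simp add: power2_eq_square algebra_simps)
    have "0 \<le> (cmod (f n) - cmod (g n))\<^sup>2" by simp
    then show ?thesis using e by linarith
  qed
  finally have b: "(cmod (f n - g n))\<^sup>2 \<le> 2 * (cmod (f n))\<^sup>2 + 2 * (cmod (g n))\<^sup>2" .
  have "w n * (cmod (f n - g n))\<^sup>2 \<le> w n * (2 * (cmod (f n))\<^sup>2 + 2 * (cmod (g n))\<^sup>2)"
    using b w[of n] by (rule mult_left_mono)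
  then show "norm (w n * (cmod (f n - g n))\<^sup>2) \<le> 2 * (w n * (cmod (f n))\<^sup>2) + 2 * (w n * (cmod (g n))\<^sup>2)"
    using w[of n] by (simp add: algebra_simps)
qed

lemma ell2_minus: "f \<in> ell2 \<Longrightarrow> g \<in> ell2 \<Longrightarrow> (\<lambda>n. f n - g n) \<in> ell2"
  using wsum_minus[of "\<lambda>_. 1" f g] by (simp add: ell2_def)

lemma ell2_zero: "(\<lambda>n. 0) \<in> ell2"
  by (simp add: ell2_def)

lemma ell2_plus: "f \<in> ell2 \<Longrightarrow> g \<in> ell2 \<Longrightarrow> (\<lambda>n. f n + g n) \<in> ell2"
proof -
  assume "f \<in> ell2" "g \<in> ell2"
  then have "(\<lambda>n. 0 - g n) \<in> ell2" using ell2_minus[OF ell2_zero] by auto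
  from ell2_minus[OF \<open>f \<in> ell2\<close> this] show ?thesis by simp
qed

lemma ell2_scale: "f \<in> ell2 \<Longrightarrow> (\<lambda>n. c * f n) \<in> ell2"
  unfolding ell2_def by (simp add: norm_mult power_mult_distrib summable_mult)

lemma pow_dom_minus:
  assumes lin: "\<And>f g. T (\<lambda>n. f n - g n) = (\<lambda>n. T f n - T g n)"
    and Dm: "\<And>f g. f \<in> D \<Longrightarrow> g \<in> D \<Longrightarrow> (\<lambda>n. f n - g n) \<in> D"
  shows "f \<in> pow_dom D T k \<Longrightarrow> g \<in> pow_dom D T k \<Longrightarrow> (\<lambda>n. f n - g n) \<in> pow_dom D T k"
proof (induction k arbitrary: f g)
  case 0 then show ?case by (simp add: ell2_minus)
next
  case (Suc k)
  then show ?case by (simp add: Dm lin)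
qed

lemma pow_dom_T: "f \<in> pow_dom D T (Suc k) \<Longrightarrow> T f \<in> pow_dom D T k"
  by simp

lemma omp_Suc: "one_minus_pow T (Suc k) f = (\<lambda>n. one_minus_pow T k f n - T (one_minus_pow T k f) n)"
  by (simp add: one_minus_pow_def)

lemma omp_in:
  assumes lin: "\<And>f g. T (\<lambda>n. f n - g n) = (\<lambda>n. T f n - T g n)"
    and Dm: "\<And>f g. f \<in> D \<Longrightarrow> g \<in> D \<Longrightarrow> (\<lambda>n. f n - g n) \<in> D"
    and f: "f \<in> (\<Inter>k. pow_dom D T k)"
  shows "one_minus_pow T j f \<in> (\<Inter>k. pow_dom D T k)"
proof (induction j)
  case 0 then show ?case using f by (simp add: one_minus_pow_def)
next
  case (Suc j)
  show ?case
  proof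
    fix k
    from Suc have h: "\<forall>k. one_minus_pow T j f \<in> pow_dom D T k" by blast
    have "one_minus_pow T j f \<in> pow_dom D T k" "one_minus_pow T j f \<in> pow_dom D T (Suc k)"
      using h[rule_format, of k] h[rule_format, of "Suc k"] by blast+
    then show "one_minus_pow T (Suc j) f \<in> pow_dom D T k"
      unfolding omp_Suc by (intro pow_dom_minus[OF lin Dm]) auto
  qed
qed

lemma log_partial_in:
  assumes "\<And>k. one_minus_pow T k f \<in> ell2"
  shows "log_partial T f K \<in> ell2"
proof (induction K)
  case 0 then show ?case by (simp add: log_partial_def ell2_zero)
next
  case (Suc K)
  have "log_partial T f (Suc K) = (\<lambda>n. log_partial T f K n + (1 / of_nat (Suc K)) * one_minus_pow T (Suc K) f n)"
    by (simp add: log_partial_def)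
  then show ?case using Suc assms ell2_plus ell2_scale by metis
qed

lemma comp_le_norm:
  assumes "h \<in> ell2" shows "cmod (h n) \<le> l2norm h"
proof -
  have "sum (\<lambda>n. (cmod (h n))\<^sup>2) {n} \<le> (\<Sum>n. (cmod (h n))\<^sup>2)"
    using assms unfolding ell2_def by (intro sum_le_suminf) auto
  then show ?thesis unfolding l2norm_def
    by (simp add: real_le_rsqrt)
qed

lemma general:
  assumes lin: "\<And>f g. T (\<lambda>n. f n - g n) = (\<lambda>n. T f n - T g n)"
    and Dm: "\<And>f g. f \<in> D \<Longrightarrow> g \<in> D \<Longrightarrow> (\<lambda>n. f n - g n) \<in> D"
    and f: "f \<in> log_dom D T"
    and inv: "\<And>k. one_minus_pow T k f n0 = c" and c: "c \<noteq> 0"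
  shows False
proof -
  from f have fi: "f \<in> (\<Inter>k. pow_dom D T k)" and
    "\<exists>g \<in> ell2. (\<lambda>K. l2norm (\<lambda>n. log_partial T f K n - g n)) \<longlonglongrightarrow> 0"
    unfolding log_dom_def by auto
  then obtain g where g: "g \<in> ell2" and lim: "(\<lambda>K. l2norm (\<lambda>n. log_partial T f K n - g n)) \<longlonglongrightarrow> 0"
    by blast
  have "\<And>k. one_minus_pow T k f \<in> ell2"
    using omp_in[OF lin Dm fi] by (metis INT_E UNIV_I pow_dom.simps(1))
  then have lp: "\<And>K. log_partial T f K \<in> ell2" by (rule log_partial_in)
  have le: "\<And>K. norm (log_partial T f K n0 - g n0) \<le> l2norm (\<lambda>n. log_partial T f K n - g n)"
    using comp_le_norm[OF ell2_minus[OF lp g]] by simp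
  have "(\<lambda>K. log_partial T f K n0 - g n0) \<longlonglongrightarrow> 0"
    by (rule tendsto_norm_zero_cancel, rule Lim_null_comparison[OF _ lim]) (simp add: le)
  then have "(\<lambda>K. log_partial T f K n0) \<longlonglongrightarrow> g n0"
    by (rule LIM_zero_cancel)
  moreover have "\<And>K. log_partial T f K n0 = c * harm K"
    by (simp add: log_partial_def inv harm_def sum_distrib_left divide_inverse mult.commute)
  ultimately have "(\<lambda>K. c * harm K) \<longlonglongrightarrow> g n0" by simp
  then have "(\<lambda>K. inverse c * (c * harm K)) \<longlonglongrightarrow> inverse c * g n0"
    by (intro tendsto_mult tendsto_const)
  moreover have "(\<lambda>K. inverse c * (c * harm K)) = harm" using c by (simp add: fun_eq_iff)
  ultimately have "(harm :: nat \<Rightarrow> complex) \<longlonglongrightarrow> inverse c * g n0" by simp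
  then have "convergent (harm :: nat \<Rightarrow> complex)" by (rule convergentI)
  then show False using not_convergent_harm by auto
qed


lemma lin_ann: "ann (\<lambda>n. f n - g n) = (\<lambda>n. ann f n - ann g n)"
  by (simp add: ann_def fun_eq_iff right_diff_distrib)

lemma lin_cre: "cre (\<lambda>n. f n - g n) = (\<lambda>n. cre f n - cre g n)"
  by (simp add: cre_def fun_eq_iff right_diff_distrib)

lemma Dm_ann: "f \<in> ann_dom \<Longrightarrow> g \<in> ann_dom \<Longrightarrow> (\<lambda>n. f n - g n) \<in> ann_dom"
proof -
  assume a: "f \<in> ann_dom" "g \<in> ann_dom"
  have "(\<lambda>n. f n - g n) \<in> ell2" using a unfolding ann_dom_def by (intro ell2_minus) simp_all
  moreover have "summable (\<lambda>n. real n * (cmod (f n - g n))\<^sup>2)"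
    using a unfolding ann_dom_def by (intro wsum_minus) simp_all
  ultimately show ?thesis unfolding ann_dom_def by simp
qed

lemma Dm_cre: "f \<in> cre_dom \<Longrightarrow> g \<in> cre_dom \<Longrightarrow> (\<lambda>n. f n - g n) \<in> cre_dom"
proof -
  assume a: "f \<in> cre_dom" "g \<in> cre_dom"
  have "(\<lambda>n. f n - g n) \<in> ell2" using a unfolding cre_dom_def by (intro ell2_minus) simp_all
  moreover have "summable (\<lambda>n. real (Suc n) * (cmod (f n - g n))\<^sup>2)"
    using a unfolding cre_dom_def by (intro wsum_minus) simp_all
  ultimately show ?thesis unfolding cre_dom_def by simp
qed

lemma zero_log_dom:
  assumes T0: "T (\<lambda>n. 0) = (\<lambda>n. 0)" and D0: "(\<lambda>n. 0) \<in> D"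
  shows "(\<lambda>n. 0) \<in> log_dom D T"
proof -
  have pd: "(\<lambda>n. 0) \<in> pow_dom D T k" for k
  proof (induction k)
    case 0 show ?case by (simp add: ell2_zero)
  next
    case (Suc k) then show ?case by (simp add: T0 D0)
  qed
  have om: "one_minus_pow T k (\<lambda>n. 0) = (\<lambda>n. 0)" for k
  proof (induction k)
    case 0 show ?case by (simp add: one_minus_pow_def)
  next
    case (Suc k) then show ?case by (simp add: omp_Suc T0)
  qed
  have lp: "log_partial T (\<lambda>n. 0) K = (\<lambda>n. 0)" for K
    by (simp add: log_partial_def om)
  have "(\<lambda>K. l2norm (\<lambda>n. log_partial T (\<lambda>n. 0) K n - 0)) \<longlonglongrightarrow> 0"
    by (simp add: lp l2norm_def)
  then have "\<exists>g \<in> ell2. (\<lambda>K. l2norm (\<lambda>n. log_partial T (\<lambda>n. 0) K n - g n)) \<longlonglongrightarrow> 0"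
    using ell2_zero by (intro bexI[of _ "\<lambda>n. 0"]) auto
  moreover have "(\<lambda>n. 0) \<in> (\<Inter>k. pow_dom D T k)" using pd by blast
  ultimately show ?thesis unfolding log_dom_def by (intro CollectI conjI)
qed

lemma ann0: "ann (\<lambda>n. 0) = (\<lambda>n. 0)" by (simp add: ann_def)
lemma cre0: "cre (\<lambda>n. 0) = (\<lambda>n. 0)" by (simp add: cre_def fun_eq_iff)
lemma ann_dom0: "(\<lambda>n. 0) \<in> ann_dom" by (simp add: ann_dom_def ell2_zero)
lemma cre_dom0: "(\<lambda>n. 0) \<in> cre_dom" by (simp add: cre_dom_def ell2_zero)

lemma ann_case:
  assumes f: "f \<in> log_dom ann_dom ann" and fin: "f \<in> ell2_fin" and nz: "f \<noteq> (\<lambda>n. 0)"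
  shows False
proof -
  let ?S = "{n. f n \<noteq> 0}"
  have fS: "finite ?S" using fin by (simp add: ell2_fin_def)
  have neS: "?S \<noteq> {}" using nz by auto
  define N where "N = Max ?S"
  have fN: "f N \<noteq> 0" using Max_in[OF fS neS] N_def by auto
  have big: "\<And>n. n > N \<Longrightarrow> f n = 0" using Max_ge[OF fS] N_def by (meson not_le mem_Collect_eq)
  have inv: "(\<forall>n>N. one_minus_pow ann k f n = 0) \<and> one_minus_pow ann k f N = f N" for k
  proof (induction k)
    case 0 then show ?case using big by (simp add: one_minus_pow_def)
  next
    case (Suc k)
    then show ?case by (simp add: omp_Suc ann_def)
  qed
  show False
    by (rule general[OF lin_ann Dm_ann f, of N "f N"]) (use inv fN in auto)
qed

lemma cre_case:
  assumes f: "f \<in> log_dom cre_dom cre" and nz: "f \<noteq> (\<lambda>n. 0)"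
  shows False
proof -
  obtain m where m: "f m \<noteq> 0" using nz by auto
  define M where "M = (LEAST n. f n \<noteq> 0)"
  have fM: "f M \<noteq> 0" unfolding M_def by (rule LeastI[of _ m]) (rule m)
  have small: "\<And>n. n < M \<Longrightarrow> f n = 0" unfolding M_def using not_less_Least by blast
  have inv: "(\<forall>n<M. one_minus_pow cre k f n = 0) \<and> one_minus_pow cre k f M = f M" for k
  proof (induction k)
    case 0 then show ?case using small by (simp add: one_minus_pow_def)
  next
    case (Suc k)
    then show ?case by (auto simp: omp_Suc cre_def)
  qed
  show False
    by (rule general[OF lin_cre Dm_cre f, of M "f M"]) (use inv fM in auto)
qed

theorem mainTheorem3:
  shows "log_dom ann_dom ann \<inter> ell2_fin = {\<lambda>n. 0} \<and> log_dom cre_dom cre = {\<lambda>n. 0} \<and> phase_dom = {\<lambda>n. 0}"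
proof -
  have za: "(\<lambda>n. 0) \<in> log_dom ann_dom ann" by (rule zero_log_dom[of ann ann_dom, OF ann0 ann_dom0])
  have zc: "(\<lambda>n. 0) \<in> log_dom cre_dom cre" by (rule zero_log_dom[of cre cre_dom, OF cre0 cre_dom0])
  have zf: "(\<lambda>n. 0::complex) \<in> ell2_fin" by (simp add: ell2_fin_def)
  have 1: "log_dom ann_dom ann \<inter> ell2_fin = {\<lambda>n. 0}"
    using za zf ann_case by blast
  have 2: "log_dom cre_dom cre = {\<lambda>n. 0}"
    using zc cre_case by blast
  have 3: "phase_dom = {\<lambda>n. 0}"
    unfolding phase_dom_def 2 using za by blast
  show ?thesis using 1 2 3 by blast
qed

end
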